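(* Let $G$ be a graph whose twin graph $G^*$, with its vertex types, is one of the following: (G7) $G^*$ is $K_4-e$ with a pendant edge attached to one of its degree-3 vertices (so $G^*$ has one vertex of degree 4, one of degree 3, two of degree 2 and one leaf), where the leaf is of type (1), the degree-4 and degree-3 vertices are of type (1K), one of the degree-2 vertices is of type (K) and the other is of type (1); (G8) $G^*$ is $K_4-e$, one of its degree-2 vertices is of type (K), the other is of type (1), one of its degree-3 vertices is of type (N), and the other is of type (1K); (G9) $G^*$ is $C_4$, two adjacent vertices are of type (K) and the other two are of type (1); (G10) $G^*$ is $C_4+K_1$, two adjacent degree-3 vertices are of type (K), the degree-4 vertex is of type (1K), and the other two vertices are of type (1). Then $D(G)\neq n(G)-2$.
   Context: All graphs are finite and simple; $n(G)=|V(G)|$; $N_G(u)$ is the neighborhood of $u$; $K_4-e$ is $K_4$ with one edge deleted; $C_4$ is the 4-cycle, and the join $G+H$ is obtained from the disjoint union of $G$ and $H$ by adding all edges between $V(G)$ and $V(H)$. A distinguishing coloring of a graph $G$ is a (not necessarily proper) vertex coloring such that the only automorphism of $G$ mapping every vertex to a vertex of the same color is the identity; the distinguishing number $D(G)$ is the minimum number of colors in a distinguishing coloring of $G$. Two distinct vertices $u,v$ are twins if $N_G(u)\setminus\{v\}=N_G(v)\setminus\{u\}$. The relation $u\equiv v$ iff $u=v$ or $u,v$ are twins is an equivalence relation; the class of $v$ is denoted $v^*$. The twin graph $G^*$ has the equivalence classes as vertices, distinct classes $u^*,v^*$ being adjacent iff $uv\in E(G)$. Each class induces a complete or an edgeless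 graph. A class $v^*$ is of type (1) if $|v^*|=1$, of type (K) if $|v^*|\ge 2$ and it induces a complete graph, and of type (N) if $|v^*|\ge2$ and it induces an edgeless graph; type (1K) means type (1) or (K), type (1N) means (1) or (N), and type (KN) means (K) or (N). *)

theory Defs
  imports Main
begin

definition graph :: "'a set \<Rightarrow> ('a \<Rightarrow> 'a \<Rightarrow> bool) \<Rightarrow> bool" where
  "graph V E \<longleftrightarrow> finite V \<and> (\<forall>u v. E u v \<longrightarrow> u \<in> V \<and> v \<in> V)
     \<and> (\<forall>u v. E u v \<longrightarrow> E v u) \<and> (\<forall>u. \<not> E u u)"

definition nbr :: "'a set \<Rightarrow> ('a \<Rightarrow> 'a \<Rightarrow> bool) \<Rightarrow> 'a \<Rightarrow> 'a set" where
  "nbr V E u = {w \<in> V. E u w}"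

definition is_aut :: "'a set \<Rightarrow> ('a \<Rightarrow> 'a \<Rightarrow> bool) \<Rightarrow> ('a \<Rightarrow> 'a) \<Rightarrow> bool" where
  "is_aut V E f \<longleftrightarrow> bij_betw f V V \<and> (\<forall>u\<in>V. \<forall>v\<in>V. E u v \<longleftrightarrow> E (f u) (f v))"

definition distinguishing :: "'a set \<Rightarrow> ('a \<Rightarrow> 'a \<Rightarrow> bool) \<Rightarrow> ('a \<Rightarrow> nat) \<Rightarrow> nat \<Rightarrow> bool" where
  "distinguishing V E c k \<longleftrightarrow> c ` V \<subseteq> {..<k} \<and>
     (\<forall>f. is_aut V E f \<and> (\<forall>v\<in>V. c (f v) = c v) \<longrightarrow> (\<forall>v\<in>V. f v = v))"

definition dist_num :: "'a set \<Rightarrow> ('a \<Rightarrow> 'a \<Rightarrow> bool) \<Rightarrow> nat" where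
  "dist_num V E = (LEAST k. \<exists>c. distinguishing V E c k)"

definition twins :: "'a set \<Rightarrow> ('a \<Rightarrow> 'a \<Rightarrow> bool) \<Rightarrow> 'a \<Rightarrow> 'a \<Rightarrow> bool" where
  "twins V E u v \<longleftrightarrow> u \<in> V \<and> v \<in> V \<and> u \<noteq> v \<and> nbr V E u - {v} = nbr V E v - {u}"

definition twin_class :: "'a set \<Rightarrow> ('a \<Rightarrow> 'a \<Rightarrow> bool) \<Rightarrow> 'a \<Rightarrow> 'a set" where
  "twin_class V E v = {u \<in> V. u = v \<or> twins V E u v}"

definition twin_classes :: "'a set \<Rightarrow> ('a \<Rightarrow> 'a \<Rightarrow> bool) \<Rightarrow> 'a set set" where
  "twin_classes V E = twin_class V E ` V"

definition twin_adj :: "('a \<Rightarrow> 'a \<Rightarrow> bool) \<Rightarrow> 'a set \<Rightarrow> 'a set \<Rightarrow> bool" where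
  "twin_adj E X Y \<longleftrightarrow> X \<noteq> Y \<and> (\<exists>u\<in>X. \<exists>v\<in>Y. E u v)"

definition type1 :: "'a set \<Rightarrow> bool" where
  "type1 X \<longleftrightarrow> card X = 1"

definition typeK :: "('a \<Rightarrow> 'a \<Rightarrow> bool) \<Rightarrow> 'a set \<Rightarrow> bool" where
  "typeK E X \<longleftrightarrow> card X \<ge> 2 \<and> (\<forall>u\<in>X. \<forall>v\<in>X. u \<noteq> v \<longrightarrow> E u v)"

definition typeN :: "('a \<Rightarrow> 'a \<Rightarrow> bool) \<Rightarrow> 'a set \<Rightarrow> bool" where
  "typeN E X \<longleftrightarrow> card X \<ge> 2 \<and> (\<forall>u\<in>X. \<forall>v\<in>X. \<not> E u v)"

definition type1K :: "('a \<Rightarrow> 'a \<Rightarrow> bool) \<Rightarrow> 'a set \<Rightarrow> bool" where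
  "type1K E X \<longleftrightarrow> type1 X \<or> typeK E X"

definition pat_adj :: "(nat \<times> nat) set \<Rightarrow> nat \<Rightarrow> nat \<Rightarrow> bool" where
  "pat_adj L i j \<longleftrightarrow> (i, j) \<in> L \<or> (j, i) \<in> L"

definition twin_iso :: "'a set \<Rightarrow> ('a \<Rightarrow> 'a \<Rightarrow> bool) \<Rightarrow> (nat \<times> nat) set \<Rightarrow> nat \<Rightarrow> (nat \<Rightarrow> 'a set) \<Rightarrow> bool" where
  "twin_iso V E L m \<phi> \<longleftrightarrow> bij_betw \<phi> {..<m} (twin_classes V E) \<and>
     (\<forall>i<m. \<forall>j<m. pat_adj L i j \<longleftrightarrow> twin_adj E (\<phi> i) (\<phi> j))"

text \<open>K4-e on {0,1,2,3} (missing edge 2-3; 0,1 degree 3, 2,3 degree 2), with pendant 0-4.\<close>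
definition K4e_pendant :: "(nat \<times> nat) set" where
  "K4e_pendant = {(0,1),(0,2),(0,3),(1,2),(1,3),(0,4)}"

definition K4e :: "(nat \<times> nat) set" where
  "K4e = {(0,1),(0,2),(0,3),(1,2),(1,3)}"

definition C4 :: "(nat \<times> nat) set" where
  "C4 = {(0,1),(1,2),(2,3),(3,0)}"

definition C4_K1 :: "(nat \<times> nat) set" where
  "C4_K1 = {(0,1),(1,2),(2,3),(3,0),(0,4),(1,4),(2,4),(3,4)}"

definition caseG7 :: "'a set \<Rightarrow> ('a \<Rightarrow> 'a \<Rightarrow> bool) \<Rightarrow> bool" where
  "caseG7 V E \<longleftrightarrow> (\<exists>\<phi>. twin_iso V E K4e_pendant 5 \<phi> \<and> type1 (\<phi> 4) \<and>
     type1K E (\<phi> 0) \<and> type1K E (\<phi> 1) \<and> typeK E (\<phi> 2) \<and> type1 (\<phi> 3))"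

definition caseG8 :: "'a set \<Rightarrow> ('a \<Rightarrow> 'a \<Rightarrow> bool) \<Rightarrow> bool" where
  "caseG8 V E \<longleftrightarrow> (\<exists>\<phi>. twin_iso V E K4e 4 \<phi> \<and>
     typeN E (\<phi> 0) \<and> type1K E (\<phi> 1) \<and> typeK E (\<phi> 2) \<and> type1 (\<phi> 3))"

definition caseG9 :: "'a set \<Rightarrow> ('a \<Rightarrow> 'a \<Rightarrow> bool) \<Rightarrow> bool" where
  "caseG9 V E \<longleftrightarrow> (\<exists>\<phi>. twin_iso V E C4 4 \<phi> \<and>
     typeK E (\<phi> 0) \<and> typeK E (\<phi> 1) \<and> type1 (\<phi> 2) \<and> type1 (\<phi> 3))"

definition caseG10 :: "'a set \<Rightarrow> ('a \<Rightarrow> 'a \<Rightarrow> bool) \<Rightarrow> bool" where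
  "caseG10 V E \<longleftrightarrow> (\<exists>\<phi>. twin_iso V E C4_K1 5 \<phi> \<and>
     typeK E (\<phi> 0) \<and> typeK E (\<phi> 1) \<and> type1 (\<phi> 2) \<and> type1 (\<phi> 3) \<and> type1K E (\<phi> 4))"

end

theory Submission
  imports Defs
begin


lemma graph_sym: "graph V E \<Longrightarrow> E u v \<Longrightarrow> E v u"
  unfolding graph_def by blast
lemma graph_irr: "graph V E \<Longrightarrow> \<not> E u u"
  unfolding graph_def by blast
lemma graph_V1: "graph V E \<Longrightarrow> E u v \<Longrightarrow> u \<in> V"
  unfolding graph_def by blast
lemma graph_V2: "graph V E \<Longrightarrow> E u v \<Longrightarrow> v \<in> V"
  unfolding graph_def by blast

lemma twins_sym: "twins V E u v \<Longrightarrow> twins V E v u"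
  unfolding twins_def by blast

lemma twins_trans:
  assumes g: "graph V E" and uv: "twins V E u v" and vw: "twins V E v w" and ne: "u \<noteq> w"
  shows "twins V E u w"
proof -
  have V: "u \<in> V" "v \<in> V" "w \<in> V" "u \<noteq> v" "v \<noteq> w" using uv vw unfolding twins_def by auto
  have 1: "\<And>x. x \<noteq> v \<Longrightarrow> x \<noteq> u \<Longrightarrow> E u x = E v x"
    using uv g unfolding twins_def nbr_def graph_def by blast
  have 2: "\<And>x. x \<noteq> v \<Longrightarrow> x \<noteq> w \<Longrightarrow> E v x = E w x"
    using vw g unfolding twins_def nbr_def graph_def by blast
  have "\<And>x. x \<noteq> u \<Longrightarrow> x \<noteq> w \<Longrightarrow> E u x = E w x"
  proof -
    fix x assume a: "x \<noteq> u" "x \<noteq> w"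
    show "E u x = E w x"
    proof (cases "x = v")
      case True
      have "E u v = E v u" using g graph_sym by metis
      also have "\<dots> = E w u" using 2[of u] V ne by auto
      also have "\<dots> = E u w" using g graph_sym by metis
      also have "\<dots> = E v w" using 1[of w] V ne by auto
      also have "\<dots> = E w v" using g graph_sym by metis
      finally show ?thesis using True by simp
    next
      case False
      then show ?thesis using 1 2 a by auto
    qed
  qed
  note * = this
  have irr: "\<And>x. \<not> E x x" using graph_irr[OF g] by blast
  have "nbr V E u - {w} = nbr V E w - {u}"
  proof (rule set_eqI)
    fix x
    show "x \<in> nbr V E u - {w} \<longleftrightarrow> x \<in> nbr V E w - {u}"
    proof (cases "x = u \<or> x = w")
      case True then show ?thesis using irr unfolding nbr_def by auto
    next
      case False then show ?thesis using *[of x] unfolding nbr_def by auto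
    qed
  qed
  then show ?thesis using V ne unfolding twins_def by auto
qed

lemma tc_self: "v \<in> V \<Longrightarrow> v \<in> twin_class V E v"
  unfolding twin_class_def by auto

lemma tc_sub: "twin_class V E w \<subseteq> V"
  unfolding twin_class_def by auto

lemma tc_eq:
  assumes g: "graph V E" and u: "u \<in> twin_class V E w"
  shows "twin_class V E u = twin_class V E w"
proof -
  have uw: "u = w \<or> twins V E u w" and uV: "u \<in> V" using u unfolding twin_class_def by auto
  show ?thesis
  proof (cases "u = w")
    case True then show ?thesis by simp
  next
    case False
    then have t: "twins V E u w" using uw by auto
    show ?thesis
    proof (rule set_eqI)
      fix x
      show "x \<in> twin_class V E u \<longleftrightarrow> x \<in> twin_class V E w"
      proof
        assume "x \<in> twin_class V E u"
        then have "x \<in> V" "x = u \<or> twins V E x u" unfolding twin_class_def by auto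
        then have "x = w \<or> twins V E x w"
        proof (cases "x = w")
          case False
          then show ?thesis using t twins_trans[OF g, of x u w] \<open>x = u \<or> twins V E x u\<close> by blast
        qed simp
        then show "x \<in> twin_class V E w" using \<open>x \<in> V\<close> unfolding twin_class_def by simp
      next
        assume "x \<in> twin_class V E w"
        then have "x \<in> V" "x = w \<or> twins V E x w" unfolding twin_class_def by auto
        then have "x = u \<or> twins V E x u"
        proof (cases "x = u")
          case False
          have t2: "twins V E w u" using twins_sym[OF t] .
          then show ?thesis using twins_trans[OF g, of x w u] \<open>x = w \<or> twins V E x w\<close> False by blast
        qed simp
        then show "x \<in> twin_class V E u" using \<open>x \<in> V\<close> unfolding twin_class_def by simp
      qed
    qed
  qed
qed

lemma tc_edge:
  assumes g: "graph V E" and u: "u \<in> twin_class V E w" and x: "x \<notin> twin_class V E w"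
  shows "E u x = E w x"
proof (cases "u = w")
  case True then show ?thesis by simp
next
  case False
  then have t: "twins V E u w" using u unfolding twin_class_def by auto
  then have "w \<in> V" unfolding twins_def by auto
  then have "w \<in> twin_class V E w" by (rule tc_self)
  then have "x \<noteq> w" "x \<noteq> u" using x u by auto
  moreover have "nbr V E u - {w} = nbr V E w - {u}" using t unfolding twins_def by blast
  ultimately have "(x \<in> nbr V E u) = (x \<in> nbr V E w)" by blast
  then show ?thesis using graph_V2[OF g, of u x] graph_V2[OF g, of w x] unfolding nbr_def by blast
qed

lemma iso_class: "twin_iso V E L m \<phi> \<Longrightarrow> i < m \<Longrightarrow> \<exists>w\<in>V. \<phi> i = twin_class V E w"
proof -
  assume a: "twin_iso V E L m \<phi>" "i < m"
  then have "\<phi> i \<in> \<phi> ` {..<m}" by auto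
  then have "\<phi> i \<in> twin_class V E ` V"
    using a(1) unfolding twin_iso_def bij_betw_def twin_classes_def by simp
  then show ?thesis by auto
qed

lemma iso_sub: "twin_iso V E L m \<phi> \<Longrightarrow> i < m \<Longrightarrow> \<phi> i \<subseteq> V"
  using iso_class tc_sub by metis

lemma iso_cover: "twin_iso V E L m \<phi> \<Longrightarrow> v \<in> V \<Longrightarrow> \<exists>i<m. v \<in> \<phi> i"
proof -
  assume iso: "twin_iso V E L m \<phi>" and v: "v \<in> V"
  have "twin_class V E v \<in> \<phi> ` {..<m}"
    using iso v unfolding twin_iso_def bij_betw_def twin_classes_def by auto
  then show ?thesis using tc_self[OF v] by auto
qed

lemma iso_tc: "graph V E \<Longrightarrow> twin_iso V E L m \<phi> \<Longrightarrow> i < m \<Longrightarrow> v \<in> \<phi> i \<Longrightarrow> twin_class V E v = \<phi> i"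
  using iso_class tc_eq by metis

lemma iso_disj: "graph V E \<Longrightarrow> twin_iso V E L m \<phi> \<Longrightarrow> i < m \<Longrightarrow> j < m \<Longrightarrow> v \<in> \<phi> i \<Longrightarrow> v \<in> \<phi> j \<Longrightarrow> i = j"
proof -
  assume a: "graph V E" "twin_iso V E L m \<phi>" "i < m" "j < m" "v \<in> \<phi> i" "v \<in> \<phi> j"
  then have "\<phi> i = \<phi> j" using iso_tc by metis
  then show "i = j" using a unfolding twin_iso_def bij_betw_def inj_on_def by auto
qed

lemma iso_cross:
  assumes g: "graph V E" and iso: "twin_iso V E L m \<phi>" and ij: "i < m" "j < m" "i \<noteq> j"
    and u: "u \<in> \<phi> i" and v: "v \<in> \<phi> j"
  shows "E u v = pat_adj L i j"
proof -
  have ne: "\<phi> i \<noteq> \<phi> j" using iso ij unfolding twin_iso_def bij_betw_def inj_on_def by auto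
  have pa: "pat_adj L i j = twin_adj E (\<phi> i) (\<phi> j)" using iso ij unfolding twin_iso_def by auto
  have tu: "twin_class V E u = \<phi> i" and tv: "twin_class V E v = \<phi> j" using iso_tc[OF g iso] ij u v by auto
  have key: "E u v" if "u' \<in> \<phi> i" "v' \<in> \<phi> j" "E u' v'" for u' v'
  proof -
    have "v' \<notin> \<phi> i" using iso_disj[OF g iso] ij that by metis
    then have "E u' v' = E u v'" using tc_edge[OF g, of u' u v'] tu that by simp
    moreover have "u \<notin> \<phi> j" using iso_disj[OF g iso] ij u by metis
    then have "E v' u = E v u" using tc_edge[OF g, of v' v u] tv that by simp
    ultimately show ?thesis using that g graph_sym by metis
  qed
  show ?thesis unfolding pa twin_adj_def using ne key u v by blast
qed

lemma ix_ex: "finite X \<Longrightarrow> \<exists>h. inj_on h X \<and> h ` X \<subseteq> {..<card X}"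
proof -
  assume "finite X"
  then obtain h where "bij_betw h X {0..<card X}" using ex_bij_betw_finite_nat by blast
  then have "inj_on h X \<and> h ` X \<subseteq> {..<card X}" unfolding bij_betw_def by auto
  then show ?thesis by blast
qed

definition ix :: "'a set \<Rightarrow> 'a \<Rightarrow> nat" where
  "ix X = (SOME h. inj_on h X \<and> h ` X \<subseteq> {..<card X})"

lemma ix_both: "finite X \<Longrightarrow> inj_on (ix X) X \<and> ix X ` X \<subseteq> {..<card X}"
proof -
  assume "finite X"
  from ix_ex[OF this] show ?thesis unfolding ix_def by (rule someI_ex)
qed
lemma ix_inj: "finite X \<Longrightarrow> inj_on (ix X) X"
  using ix_both by blast
lemma ix_lt: "finite X \<Longrightarrow> v \<in> X \<Longrightarrow> ix X v < card X"
  using ix_both by blast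

definition stabS :: "'a set \<Rightarrow> ('a \<Rightarrow> 'a) \<Rightarrow> 'a set \<Rightarrow> bool" where
  "stabS V f S \<longleftrightarrow> (\<forall>v\<in>V. (f v \<in> S) = (v \<in> S))"

lemma aut_in: "is_aut V E f \<Longrightarrow> v \<in> V \<Longrightarrow> f v \<in> V"
  unfolding is_aut_def bij_betw_def by auto
lemma aut_E: "is_aut V E f \<Longrightarrow> u \<in> V \<Longrightarrow> v \<in> V \<Longrightarrow> E (f u) (f v) = E u v"
  unfolding is_aut_def by auto
lemma aut_inj: "is_aut V E f \<Longrightarrow> u \<in> V \<Longrightarrow> v \<in> V \<Longrightarrow> (f u = f v) = (u = v)"
  unfolding is_aut_def bij_betw_def inj_on_def by auto
lemma aut_surj: "is_aut V E f \<Longrightarrow> w \<in> V \<Longrightarrow> \<exists>u\<in>V. w = f u"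
  unfolding is_aut_def bij_betw_def by auto

lemma stab_color: "is_aut V E f \<Longrightarrow> \<forall>v\<in>V. c (f v) = c v \<Longrightarrow> stabS V f {v\<in>V. Q (c v)}"
  unfolding stabS_def using aut_in by fastforce

lemma stab_Int: "stabS V f S \<Longrightarrow> stabS V f T \<Longrightarrow> stabS V f (S \<inter> T)"
  unfolding stabS_def by auto
lemma stab_Un: "stabS V f S \<Longrightarrow> stabS V f T \<Longrightarrow> stabS V f (S \<union> T)"
  unfolding stabS_def by auto
lemma stab_Diff: "stabS V f S \<Longrightarrow> stabS V f T \<Longrightarrow> stabS V f (S - T)"
  unfolding stabS_def by auto

lemma stab_adj:
  assumes f: "is_aut V E f" and T: "T \<subseteq> V" "stabS V f T"
  shows "stabS V f {v\<in>V. \<exists>u\<in>T. E v u}"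
  unfolding stabS_def
proof (intro ballI iffI)
  fix v assume v: "v \<in> V" and "f v \<in> {v \<in> V. \<exists>u\<in>T. E v u}"
  then obtain w where w: "w \<in> T" "E (f v) w" by auto
  then obtain u where u: "u \<in> V" "w = f u" using aut_surj[OF f] T by blast
  then have "u \<in> T" using T w unfolding stabS_def by auto
  moreover have "E v u" using w u aut_E[OF f v u(1)] by simp
  ultimately show "v \<in> {v \<in> V. \<exists>u\<in>T. E v u}" using v by auto
next
  fix v assume v: "v \<in> V" and "v \<in> {v \<in> V. \<exists>u\<in>T. E v u}"
  then obtain u where u: "u \<in> T" "E v u" by auto
  then have "f u \<in> T" "E (f v) (f u)" using T v aut_E[OF f] unfolding stabS_def by auto
  then show "f v \<in> {v \<in> V. \<exists>u\<in>T. E v u}" using aut_in[OF f v] by auto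
qed

lemma stab_nonadj:
  assumes f: "is_aut V E f" and T: "T \<subseteq> V" "stabS V f T"
  shows "stabS V f {v\<in>V. \<exists>u\<in>T. u \<noteq> v \<and> \<not> E v u}"
  unfolding stabS_def
proof (intro ballI iffI)
  fix v assume v: "v \<in> V" and "f v \<in> {v \<in> V. \<exists>u\<in>T. u \<noteq> v \<and> \<not> E v u}"
  then obtain w where w: "w \<in> T" "w \<noteq> f v" "\<not> E (f v) w" by auto
  then obtain u where u: "u \<in> V" "w = f u" using aut_surj[OF f] T by blast
  then have "u \<in> T" using T w unfolding stabS_def by auto
  moreover have "\<not> E v u" "u \<noteq> v" using w u aut_E[OF f v u(1)] by auto
  ultimately show "v \<in> {v \<in> V. \<exists>u\<in>T. u \<noteq> v \<and> \<not> E v u}" using v by auto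
next
  fix v assume v: "v \<in> V" and "v \<in> {v \<in> V. \<exists>u\<in>T. u \<noteq> v \<and> \<not> E v u}"
  then obtain u where u: "u \<in> T" "u \<noteq> v" "\<not> E v u" by auto
  then have "f u \<in> T" "\<not> E (f v) (f u)" "f u \<noteq> f v"
    using T v aut_E[OF f] aut_inj[OF f] unfolding stabS_def by auto
  then show "f v \<in> {v \<in> V. \<exists>u\<in>T. u \<noteq> v \<and> \<not> E v u}" using aut_in[OF f v] by auto
qed

lemma stab_V: "is_aut V E f \<Longrightarrow> stabS V f V"
  unfolding stabS_def using aut_in by metis

lemma stab_mem: "stabS V f S \<Longrightarrow> v \<in> V \<Longrightarrow> v \<in> S \<Longrightarrow> f v \<in> S"
  unfolding stabS_def by auto

lemma dist_le: "distinguishing V E c k \<Longrightarrow> dist_num V E \<le> k"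
  unfolding dist_num_def by (rule Least_le) blast



lemma col_inj:
  assumes g: "graph V E" and u: "u \<in> V" and v: "v \<in> V" and t: "twin_class V E u = twin_class V E v"
    and c: "ix (twin_class V E u) u + b u = ix (twin_class V E v) v + b v" and b: "b u = b v"
  shows "u = v"
proof -
  have fin: "finite (twin_class V E u)" using g tc_sub unfolding graph_def by (metis finite_subset)
  have "u \<in> twin_class V E u" "v \<in> twin_class V E u" using tc_self u v t by metis+
  moreover have "ix (twin_class V E u) u = ix (twin_class V E u) v" using c b t by simp
  ultimately show ?thesis using ix_inj[OF fin] unfolding inj_on_def by blast
qed

lemma other2: "2 \<le> card X \<Longrightarrow> v \<in> X \<Longrightarrow> \<exists>u\<in>X. u \<noteq> v"
proof -
  assume cB: "2 \<le> card X" and v: "v \<in> X"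
  have "\<not> X \<subseteq> {v}"
  proof
    assume "X \<subseteq> {v}"
    then have "card X \<le> card {v}" by (intro card_mono) auto
    then show False using cB by simp
  qed
  then show "\<exists>u\<in>X. u \<noteq> v" by blast
qed

lemma t1K_card: "type1K E X \<Longrightarrow> 1 \<le> card X"
  unfolding type1K_def type1_def typeK_def by auto

lemma t1K_clique: "type1K E X \<Longrightarrow> u \<in> X \<Longrightarrow> v \<in> X \<Longrightarrow> u \<noteq> v \<Longrightarrow> E u v"
  unfolding type1K_def type1_def typeK_def by (auto simp: card_1_singleton_iff)

lemma cases4: "(i::nat) < 4 \<Longrightarrow> i = 0 \<or> i = 1 \<or> i = 2 \<or> i = 3" by linarith
lemma cases5: "(i::nat) < 5 \<Longrightarrow> i = 0 \<or> i = 1 \<or> i = 2 \<or> i = 3 \<or> i = 4" by linarith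



lemma G7:
  assumes g: "graph V E" and iso: "twin_iso V E K4e_pendant 5 \<phi>"
    and t4: "type1 (\<phi> 4)" and tA: "type1K E (\<phi> 0)" and tB: "type1K E (\<phi> 1)"
    and tC: "typeK E (\<phi> 2)" and t3: "type1 (\<phi> 3)"
  shows "dist_num V E + 3 \<le> card V"
proof -
  define A where "A = \<phi> 0"
  define B where "B = \<phi> 1"
  define C where "C = \<phi> 2"
  obtain y where Y: "\<phi> 3 = {y}" using t3 unfolding type1_def by (meson card_1_singletonE)
  obtain z where Z: "\<phi> 4 = {z}" using t4 unfolding type1_def by (meson card_1_singletonE)
  have fin: "finite V" using g unfolding graph_def by blast
  have sub: "A \<subseteq> V" "B \<subseteq> V" "C \<subseteq> V" "y \<in> V" "z \<in> V"
    using iso_sub[OF iso, of 0] iso_sub[OF iso, of 1] iso_sub[OF iso, of 2] iso_sub[OF iso, of 3]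
      iso_sub[OF iso, of 4] Y Z
    unfolding A_def B_def C_def by auto
  have cover: "\<And>v. v \<in> V \<Longrightarrow> v \<in> A \<or> v \<in> B \<or> v \<in> C \<or> v = y \<or> v = z"
  proof -
    fix v assume "v \<in> V"
    then obtain i where "i < 5" "v \<in> \<phi> i" using iso_cover[OF iso] by blast
    moreover have "i = 0 \<or> i = 1 \<or> i = 2 \<or> i = 3 \<or> i = 4" using cases5 \<open>i < 5\<close> by blast
    ultimately show "v \<in> A \<or> v \<in> B \<or> v \<in> C \<or> v = y \<or> v = z" unfolding A_def B_def C_def using Y Z by auto
  qed
  have D: "\<And>i j v. i < 5 \<Longrightarrow> j < 5 \<Longrightarrow> v \<in> \<phi> i \<Longrightarrow> v \<in> \<phi> j \<Longrightarrow> i = j" using iso_disj[OF g iso] by blast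
  have disj: "y \<notin> A" "y \<notin> B" "y \<notin> C" "\<And>v. v \<in> A \<Longrightarrow> v \<notin> B" "\<And>v. v \<in> A \<Longrightarrow> v \<notin> C"
    "\<And>v. v \<in> B \<Longrightarrow> v \<notin> C" "z \<notin> A" "z \<notin> B" "z \<notin> C" "y \<noteq> z"
    using D[of 0 3 y] D[of 1 3 y] D[of 2 3 y] D[of 0 1] D[of 0 2] D[of 1 2]
      D[of 0 4 z] D[of 1 4 z] D[of 2 4 z] D[of 3 4 y] Y Z
    unfolding A_def B_def C_def by auto
  have CR: "\<And>i j u v. i < 5 \<Longrightarrow> j < 5 \<Longrightarrow> i \<noteq> j \<Longrightarrow> u \<in> \<phi> i \<Longrightarrow> v \<in> \<phi> j \<Longrightarrow> E u v = pat_adj K4e_pendant i j"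
    using iso_cross[OF g iso] by blast
  have eAz: "\<And>v. v \<in> A \<Longrightarrow> E v z"
    using CR[of 0 4] Z unfolding A_def by (auto simp: pat_adj_def K4e_pendant_def)
  have nBz: "\<And>v. v \<in> B \<Longrightarrow> \<not> E v z"
    using CR[of 1 4] Z unfolding B_def by (auto simp: pat_adj_def K4e_pendant_def)
  have nCz: "\<And>v. v \<in> C \<Longrightarrow> \<not> E v z"
    using CR[of 2 4] Z unfolding C_def by (auto simp: pat_adj_def K4e_pendant_def)
  have nyz: "\<not> E y z"
    using CR[of 3 4] Y Z by (auto simp: pat_adj_def K4e_pendant_def)
  have eBC: "\<And>u v. v \<in> B \<Longrightarrow> u \<in> C \<Longrightarrow> E v u"
    using CR[of 1 2] unfolding B_def C_def by (auto simp: pat_adj_def K4e_pendant_def)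
  have eBy: "\<And>v. v \<in> B \<Longrightarrow> E v y"
    using CR[of 1 3] Y unfolding B_def by (auto simp: pat_adj_def K4e_pendant_def)
  have nCy: "\<And>v. v \<in> C \<Longrightarrow> \<not> E v y"
    using CR[of 2 3] Y unfolding C_def by (auto simp: pat_adj_def K4e_pendant_def)
  have nyC: "\<And>v. v \<in> C \<Longrightarrow> \<not> E y v"
    using CR[of 3 2] Y unfolding C_def by (auto simp: pat_adj_def K4e_pendant_def)
  have irr: "\<And>v. \<not> E v v" using graph_irr[OF g] by blast
  have kB: "\<And>u v. u \<in> B \<Longrightarrow> v \<in> B \<Longrightarrow> u \<noteq> v \<Longrightarrow> E u v" unfolding B_def by (rule t1K_clique[OF tB])
  have kC: "\<And>u v. u \<in> C \<Longrightarrow> v \<in> C \<Longrightarrow> u \<noteq> v \<Longrightarrow> E u v" using tC unfolding typeK_def C_def by simp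
  have cC: "card C \<ge> 2" using tC unfolding typeK_def C_def by auto
  have cA: "card A \<ge> 1" unfolding A_def by (rule t1K_card[OF tA])
  have cB: "card B \<ge> 1" unfolding B_def by (rule t1K_card[OF tB])
  have finA: "finite A" and finB: "finite B" and finC: "finite C"
    using finite_subset[OF sub(1) fin] finite_subset[OF sub(2) fin] finite_subset[OF sub(3) fin] by auto
  have Veq: "V = A \<union> B \<union> C \<union> {y} \<union> {z}"
  proof
    show "V \<subseteq> A \<union> B \<union> C \<union> {y} \<union> {z}" using cover by blast
    show "A \<union> B \<union> C \<union> {y} \<union> {z} \<subseteq> V" using sub by blast
  qed
  have cardV: "card V = card A + card B + card C + 2"
  proof -
    have "card (A \<union> B \<union> C \<union> {y} \<union> {z}) = card (A \<union> B \<union> C \<union> {y}) + 1"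
      using finA finB finC disj by (subst card_Un_disjoint) auto
    also have "card (A \<union> B \<union> C \<union> {y}) = card (A \<union> B \<union> C) + 1"
      using finA finB finC disj by (subst card_Un_disjoint) auto
    also have "card (A \<union> B \<union> C) = card (A \<union> B) + card C"
      using finA finB finC disj by (subst card_Un_disjoint) auto
    also have "card (A \<union> B) = card A + card B"
      using finA finB disj by (subst card_Un_disjoint) auto
    finally show ?thesis using Veq by simp
  qed
  have tcA: "\<And>v. v \<in> A \<Longrightarrow> twin_class V E v = A" using iso_tc[OF g iso, of 0] unfolding A_def by simp
  have tcB: "\<And>v. v \<in> B \<Longrightarrow> twin_class V E v = B" using iso_tc[OF g iso, of 1] unfolding B_def by simp
  have tcC: "\<And>v. v \<in> C \<Longrightarrow> twin_class V E v = C" using iso_tc[OF g iso, of 2] unfolding C_def by simp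
  have tcy: "twin_class V E y = {y}" using iso_tc[OF g iso, of 3 y] Y by simp
  have tcz: "twin_class V E z = {z}" using iso_tc[OF g iso, of 4 z] Z by simp
  define M where "M = max (card A) (max (card B) (card C))"
  define b where "b v = (if v = z then M else 0)" for v
  define c where "c v = ix (twin_class V E v) v + b v" for v
  have ixlt: "\<And>v. v \<in> V \<Longrightarrow> ix (twin_class V E v) v < card (twin_class V E v)"
    using ix_lt fin tc_sub tc_self finite_subset by metis
  have cz: "c z = M" using ixlt[OF sub(5)] unfolding c_def b_def tcz by simp
  have clt: "\<And>v. v \<in> V \<Longrightarrow> v \<noteq> z \<Longrightarrow> c v < M"
  proof -
    fix v assume v: "v \<in> V" "v \<noteq> z"
    have "card (twin_class V E v) \<le> M" using cover[OF v(1)] v tcA tcB tcC tcy cA unfolding M_def by auto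
    then show "c v < M" using ixlt[OF v(1)] v unfolding c_def b_def by simp
  qed
  have bcl: "\<And>u v. u \<in> V \<Longrightarrow> v \<in> V \<Longrightarrow> twin_class V E u = twin_class V E v \<Longrightarrow> b u = b v"
  proof -
    fix u v assume uv: "u \<in> V" "v \<in> V" "twin_class V E u = twin_class V E v"
    then have "u \<in> twin_class V E v" "v \<in> twin_class V E u" using tc_self by metis+
    then have "(u = z) = (v = z)" using tcz by auto
    then show "b u = b v" unfolding b_def by simp
  qed
  have dist: "distinguishing V E c (M + 1)"
    unfolding distinguishing_def
  proof (intro conjI allI impI)
    show "c ` V \<subseteq> {..<M + 1}" using cz clt by fastforce
  next
    fix f assume fa: "is_aut V E f \<and> (\<forall>v\<in>V. c (f v) = c v)"
    then have f: "is_aut V E f" and fc: "\<forall>v\<in>V. c (f v) = c v" by auto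
    define S1 where "S1 = {v\<in>V. c v = M}"
    have s1: "stabS V f S1" unfolding S1_def by (rule stab_color[OF f fc])
    have S1: "S1 = {z}" unfolding S1_def using cz clt sub by fastforce
    define S2 where "S2 = {v\<in>V. \<exists>u\<in>S1. E v u}"
    have s2: "stabS V f S2" unfolding S2_def by (rule stab_adj[OF f _ s1]) (auto simp: S1 sub)
    have S2: "S2 = A" unfolding S2_def S1 using cover eAz nBz nCz nyz irr sub by blast
    define S3 where "S3 = V - S2 - S1"
    have s3: "stabS V f S3" unfolding S3_def using stab_Diff stab_V[OF f] s1 s2 by metis
    have S3: "S3 = B \<union> C \<union> {y}" unfolding S3_def S2 S1 using cover disj sub by blast
    define S4 where "S4 = {v\<in>V. \<exists>u\<in>S3. u \<noteq> v \<and> \<not> E v u} \<inter> S3"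
    have s4: "stabS V f S4" unfolding S4_def by (rule stab_Int[OF stab_nonadj[OF f _ s3] s3]) (auto simp: S3 sub)
    have S4: "S4 = C \<union> {y}" unfolding S4_def S3
    proof (rule set_eqI, rule iffI)
      fix v assume v: "v \<in> {v \<in> V. \<exists>u\<in>B \<union> C \<union> {y}. u \<noteq> v \<and> \<not> E v u} \<inter> (B \<union> C \<union> {y})"
      then have vAB: "v \<in> B \<union> C \<union> {y}" and ex: "\<exists>u\<in>B \<union> C \<union> {y}. u \<noteq> v \<and> \<not> E v u" by simp_all
      from ex obtain u where u: "u \<in> B \<union> C \<union> {y}" "u \<noteq> v" "\<not> E v u" by blast
      show "v \<in> C \<union> {y}"
      proof (rule ccontr)
        assume "v \<notin> C \<union> {y}"
        then have vB: "v \<in> B" using vAB by simp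
        show False
        proof (cases "u \<in> B")
          case True then show False using kB[OF vB True] u(2,3) by auto
        next
          case False then have "u \<in> C \<or> u = y" using u(1) by blast
          then show False using eBC[OF vB] eBy[OF vB] u(3) by auto
        qed
      qed
    next
      fix v assume v: "v \<in> C \<union> {y}"
      have vV: "v \<in> V" using v sub by blast
      show "v \<in> {v \<in> V. \<exists>u\<in>B \<union> C \<union> {y}. u \<noteq> v \<and> \<not> E v u} \<inter> (B \<union> C \<union> {y})"
      proof (cases "v = y")
        case True
        have "C \<noteq> {}" using cC by auto
        then obtain u where u: "u \<in> C" by blast
        then have "u \<noteq> v" "\<not> E v u" using True nyC disj by auto
        then show ?thesis using u vV v by blast
      next
        case False
        then have vC: "v \<in> C" using v by simp
        then have "y \<noteq> v" "\<not> E v y" using disj nCy by auto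
        then show ?thesis using vV v by blast
      qed
    qed
    define S5 where "S5 = S3 - S4"
    have s5: "stabS V f S5" unfolding S5_def using stab_Diff s3 s4 by metis
    have S5: "S5 = B" unfolding S5_def S3 S4 using disj by blast
    define S6 where "S6 = {v\<in>V. \<exists>u\<in>S4. E v u} \<inter> S4"
    have s6: "stabS V f S6" unfolding S6_def by (rule stab_Int[OF stab_adj[OF f _ s4] s4]) (auto simp: S4 sub)
    have S6: "S6 = C" unfolding S6_def S4
    proof (rule set_eqI, rule iffI)
      fix v assume v: "v \<in> {v \<in> V. \<exists>u\<in>C \<union> {y}. E v u} \<inter> (C \<union> {y})"
      then have vCy: "v \<in> C \<union> {y}" and ex: "\<exists>u\<in>C \<union> {y}. E v u" by simp_all
      show "v \<in> C"
      proof (rule ccontr)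
        assume "v \<notin> C"
        then have "v = y" using vCy by simp
        then show False using ex nyC irr by auto
      qed
    next
      fix v assume v: "v \<in> C"
      from other2[OF cC v] obtain u where "u \<in> C" "u \<noteq> v" by blast
      then have "E v u" using kC v by simp
      moreover have "v \<in> V" using v sub(3) by blast
      ultimately show "v \<in> {v \<in> V. \<exists>u\<in>C \<union> {y}. E v u} \<inter> (C \<union> {y})"
        using \<open>u \<in> C\<close> v by blast
    qed
    define S7 where "S7 = S4 - S6"
    have s7: "stabS V f S7" unfolding S7_def using stab_Diff s4 s6 by metis
    have S7: "S7 = {y}" unfolding S7_def S4 S6 using disj by blast
    show "\<forall>v\<in>V. f v = v"
    proof
      fix v assume v: "v \<in> V"
      have fv: "f v \<in> V" using aut_in[OF f v] .
      have "f v \<in> twin_class V E v"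
        using cover[OF v] stab_mem[OF s1 v] stab_mem[OF s2 v] stab_mem[OF s5 v] stab_mem[OF s6 v] stab_mem[OF s7 v]
          tcA tcB tcC tcy tcz S1 S2 S5 S6 S7 by auto
      then have "twin_class V E (f v) = twin_class V E v" using tc_eq[OF g] by blast
      then show "f v = v" using col_inj[OF g fv v, of b] bcl[OF fv v] fc v unfolding c_def by auto
    qed
  qed
  have "dist_num V E \<le> M + 1" using dist_le[OF dist] .
  then show ?thesis using cardV cA cB cC unfolding M_def by linarith
qed



lemma G8:
  assumes g: "graph V E" and iso: "twin_iso V E K4e 4 \<phi>"
    and tA: "typeN E (\<phi> 0)" and tB: "type1K E (\<phi> 1)" and tC: "typeK E (\<phi> 2)" and t3: "type1 (\<phi> 3)"
  shows "dist_num V E + 3 \<le> card V"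
proof -
  define A where "A = \<phi> 0"
  define B where "B = \<phi> 1"
  define C where "C = \<phi> 2"
  obtain y where Y: "\<phi> 3 = {y}" using t3 unfolding type1_def by (meson card_1_singletonE)
  have fin: "finite V" using g unfolding graph_def by blast
  have sub: "A \<subseteq> V" "B \<subseteq> V" "C \<subseteq> V" "y \<in> V"
    using iso_sub[OF iso, of 0] iso_sub[OF iso, of 1] iso_sub[OF iso, of 2] iso_sub[OF iso, of 3] Y
    unfolding A_def B_def C_def by auto
  have cover: "\<And>v. v \<in> V \<Longrightarrow> v \<in> A \<or> v \<in> B \<or> v \<in> C \<or> v = y"
  proof -
    fix v assume "v \<in> V"
    then obtain i where "i < 4" "v \<in> \<phi> i" using iso_cover[OF iso] by blast
    moreover have "i = 0 \<or> i = 1 \<or> i = 2 \<or> i = 3" using cases4 \<open>i < 4\<close> by blast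
    ultimately show "v \<in> A \<or> v \<in> B \<or> v \<in> C \<or> v = y" unfolding A_def B_def C_def using Y by auto
  qed
  have D: "\<And>i j v. i < 4 \<Longrightarrow> j < 4 \<Longrightarrow> v \<in> \<phi> i \<Longrightarrow> v \<in> \<phi> j \<Longrightarrow> i = j" using iso_disj[OF g iso] by blast
  have disj: "y \<notin> A" "y \<notin> B" "y \<notin> C" "\<And>v. v \<in> A \<Longrightarrow> v \<notin> B" "\<And>v. v \<in> A \<Longrightarrow> v \<notin> C"
    "\<And>v. v \<in> B \<Longrightarrow> v \<notin> C"
    using D[of 0 3 y] D[of 1 3 y] D[of 2 3 y] D[of 0 1] D[of 0 2] D[of 1 2] Y
    unfolding A_def B_def C_def by auto
  have CR: "\<And>i j u v. i < 4 \<Longrightarrow> j < 4 \<Longrightarrow> i \<noteq> j \<Longrightarrow> u \<in> \<phi> i \<Longrightarrow> v \<in> \<phi> j \<Longrightarrow> E u v = pat_adj K4e i j"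
    using iso_cross[OF g iso] by blast
  have eAy: "\<And>v. v \<in> A \<Longrightarrow> E v y"
    using CR[of 0 3] Y unfolding A_def by (auto simp: pat_adj_def K4e_def)
  have eBy: "\<And>v. v \<in> B \<Longrightarrow> E v y"
    using CR[of 1 3] Y unfolding B_def by (auto simp: pat_adj_def K4e_def)
  have nCy: "\<And>v. v \<in> C \<Longrightarrow> \<not> E v y"
    using CR[of 2 3] Y unfolding C_def by (auto simp: pat_adj_def K4e_def)
  have eBA: "\<And>u v. v \<in> B \<Longrightarrow> u \<in> A \<Longrightarrow> E v u"
    using CR[of 1 0] unfolding A_def B_def by (auto simp: pat_adj_def K4e_def)
  have irr: "\<And>v. \<not> E v v" using graph_irr[OF g] by blast
  have kB: "\<And>u v. u \<in> B \<Longrightarrow> v \<in> B \<Longrightarrow> u \<noteq> v \<Longrightarrow> E u v" unfolding B_def by (rule t1K_clique[OF tB])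
  have nA: "\<And>u v. u \<in> A \<Longrightarrow> v \<in> A \<Longrightarrow> \<not> E u v" using tA unfolding typeN_def A_def by simp
  have cA: "card A \<ge> 2" and cC: "card C \<ge> 2" using tA tC unfolding typeN_def typeK_def A_def C_def by auto
  have cB: "card B \<ge> 1" unfolding B_def by (rule t1K_card[OF tB])
  have finA: "finite A" and finB: "finite B" and finC: "finite C"
    using finite_subset[OF sub(1) fin] finite_subset[OF sub(2) fin] finite_subset[OF sub(3) fin] by auto
  have Veq: "V = A \<union> B \<union> C \<union> {y}"
  proof
    show "V \<subseteq> A \<union> B \<union> C \<union> {y}" using cover by blast
    show "A \<union> B \<union> C \<union> {y} \<subseteq> V" using sub by blast
  qed
  have cardV: "card V = card A + card B + card C + 1"
  proof -
    have "card (A \<union> B \<union> C \<union> {y}) = card (A \<union> B \<union> C) + 1"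
      using finA finB finC disj by (subst card_Un_disjoint) auto
    also have "card (A \<union> B \<union> C) = card (A \<union> B) + card C"
      using finA finB finC disj by (subst card_Un_disjoint) auto
    also have "card (A \<union> B) = card A + card B"
      using finA finB disj by (subst card_Un_disjoint) auto
    finally show ?thesis using Veq by simp
  qed
  have tcA: "\<And>v. v \<in> A \<Longrightarrow> twin_class V E v = A" using iso_tc[OF g iso, of 0] unfolding A_def by simp
  have tcB: "\<And>v. v \<in> B \<Longrightarrow> twin_class V E v = B" using iso_tc[OF g iso, of 1] unfolding B_def by simp
  have tcC: "\<And>v. v \<in> C \<Longrightarrow> twin_class V E v = C" using iso_tc[OF g iso, of 2] unfolding C_def by simp
  have tcy: "twin_class V E y = {y}" using iso_tc[OF g iso, of 3 y] Y by simp
  define M where "M = max (card A) (max (card B) (card C))"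
  define b where "b v = (if v = y then M else 0)" for v
  define c where "c v = ix (twin_class V E v) v + b v" for v
  have ixlt: "\<And>v. v \<in> V \<Longrightarrow> ix (twin_class V E v) v < card (twin_class V E v)"
    using ix_lt fin tc_sub tc_self finite_subset by metis
  have cy: "c y = M" using ixlt[OF sub(4)] unfolding c_def b_def tcy by simp
  have clt: "\<And>v. v \<in> V \<Longrightarrow> v \<noteq> y \<Longrightarrow> c v < M"
  proof -
    fix v assume v: "v \<in> V" "v \<noteq> y"
    have "card (twin_class V E v) \<le> M" using cover[OF v(1)] v tcA tcB tcC unfolding M_def by auto
    then show "c v < M" using ixlt[OF v(1)] v unfolding c_def b_def by simp
  qed
  have bcl: "\<And>u v. u \<in> V \<Longrightarrow> v \<in> V \<Longrightarrow> twin_class V E u = twin_class V E v \<Longrightarrow> b u = b v"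
  proof -
    fix u v assume uv: "u \<in> V" "v \<in> V" "twin_class V E u = twin_class V E v"
    then have "u \<in> twin_class V E v" "v \<in> twin_class V E u" using tc_self by metis+
    then have "(u = y) = (v = y)" using tcy by auto
    then show "b u = b v" unfolding b_def by simp
  qed
  have dist: "distinguishing V E c (M + 1)"
    unfolding distinguishing_def
  proof (intro conjI allI impI)
    show "c ` V \<subseteq> {..<M + 1}" using cy clt by fastforce
  next
    fix f assume fa: "is_aut V E f \<and> (\<forall>v\<in>V. c (f v) = c v)"
    then have f: "is_aut V E f" and fc: "\<forall>v\<in>V. c (f v) = c v" by auto
    define S1 where "S1 = {v\<in>V. c v = M}"
    have s1: "stabS V f S1" unfolding S1_def by (rule stab_color[OF f fc])
    have S1: "S1 = {y}" unfolding S1_def using cy clt sub by fastforce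
    define S2 where "S2 = {v\<in>V. \<exists>u\<in>S1. E v u}"
    have s2: "stabS V f S2" unfolding S2_def by (rule stab_adj[OF f _ s1]) (auto simp: S1 sub)
    have S2: "S2 = A \<union> B" unfolding S2_def S1 using cover eAy eBy nCy irr sub by blast
    define S3 where "S3 = V - S2 - S1"
    have s3: "stabS V f S3" unfolding S3_def using stab_Diff stab_V[OF f] s1 s2 by metis
    have S3: "S3 = C" unfolding S3_def S2 S1 using cover disj sub by blast
    define S4 where "S4 = {v\<in>V. \<exists>u\<in>S2. u \<noteq> v \<and> \<not> E v u} \<inter> S2"
    have s4: "stabS V f S4" unfolding S4_def by (rule stab_Int[OF stab_nonadj[OF f _ s2] s2]) (auto simp: S2 sub)
    have S4: "S4 = A" unfolding S4_def S2
    proof (rule set_eqI, rule iffI)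
      fix v assume v: "v \<in> {v \<in> V. \<exists>u\<in>A \<union> B. u \<noteq> v \<and> \<not> E v u} \<inter> (A \<union> B)"
      then have vAB: "v \<in> A \<union> B" and ex: "\<exists>u\<in>A \<union> B. u \<noteq> v \<and> \<not> E v u" by simp_all
      from ex obtain u where u: "u \<in> A \<union> B" "u \<noteq> v" "\<not> E v u" by blast
      show "v \<in> A"
      proof (rule ccontr)
        assume "v \<notin> A"
        then have vB: "v \<in> B" using vAB by simp
        show False
        proof (cases "u \<in> A")
          case True then show False using eBA[OF vB True] u(3) by simp
        next
          case False then have "u \<in> B" using u(1) by simp
          then show False using kB[OF vB \<open>u \<in> B\<close>] u(2,3) by auto
        qed
      qed
    next
      fix v assume v: "v \<in> A"
      from other2[OF cA v] obtain u where "u \<in> A" "u \<noteq> v" by blast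
      then have "\<not> E v u" using nA v by simp
      moreover have "v \<in> V" using v sub(1) by blast
      ultimately show "v \<in> {v \<in> V. \<exists>u\<in>A \<union> B. u \<noteq> v \<and> \<not> E v u} \<inter> (A \<union> B)"
        using \<open>u \<in> A\<close> \<open>u \<noteq> v\<close> v by blast
    qed
    define S5 where "S5 = S2 - S4"
    have s5: "stabS V f S5" unfolding S5_def using stab_Diff s2 s4 by metis
    have S5: "S5 = B" unfolding S5_def S2 S4 using disj by blast
    show "\<forall>v\<in>V. f v = v"
    proof
      fix v assume v: "v \<in> V"
      have fv: "f v \<in> V" using aut_in[OF f v] .
      have "f v \<in> twin_class V E v"
        using cover[OF v] stab_mem[OF s1 v] stab_mem[OF s3 v] stab_mem[OF s4 v] stab_mem[OF s5 v]
          tcA tcB tcC tcy S1 S3 S4 S5 by auto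
      then have "twin_class V E (f v) = twin_class V E v" using tc_eq[OF g] by blast
      then show "f v = v" using col_inj[OF g fv v, of b] bcl[OF fv v] fc v unfolding c_def by auto
    qed
  qed
  have "dist_num V E \<le> M + 1" using dist_le[OF dist] .
  then show ?thesis using cardV cA cB cC unfolding M_def by linarith
qed

lemma G9:
  assumes g: "graph V E" and iso: "twin_iso V E C4 4 \<phi>"
    and tA: "typeK E (\<phi> 0)" and tB: "typeK E (\<phi> 1)" and t2: "type1 (\<phi> 2)" and t3: "type1 (\<phi> 3)"
  shows "dist_num V E + 3 \<le> card V"
proof -
  define A where "A = \<phi> 0"
  define B where "B = \<phi> 1"
  obtain x where X: "\<phi> 2 = {x}" using t2 unfolding type1_def by (meson card_1_singletonE)
  obtain y where Y: "\<phi> 3 = {y}" using t3 unfolding type1_def by (meson card_1_singletonE)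
  have fin: "finite V" using g unfolding graph_def by blast
  have sub: "A \<subseteq> V" "B \<subseteq> V" "x \<in> V" "y \<in> V"
    using iso_sub[OF iso, of 0] iso_sub[OF iso, of 1] iso_sub[OF iso, of 2] iso_sub[OF iso, of 3] X Y
    unfolding A_def B_def by auto
  have cover: "\<And>v. v \<in> V \<Longrightarrow> v \<in> A \<or> v \<in> B \<or> v = x \<or> v = y"
  proof -
    fix v assume "v \<in> V"
    then obtain i where "i < 4" "v \<in> \<phi> i" using iso_cover[OF iso] by blast
    moreover have "i = 0 \<or> i = 1 \<or> i = 2 \<or> i = 3" using \<open>i < 4\<close> by linarith
    ultimately show "v \<in> A \<or> v \<in> B \<or> v = x \<or> v = y" unfolding A_def B_def using X Y by auto
  qed
  have D: "\<And>i j v. i < 4 \<Longrightarrow> j < 4 \<Longrightarrow> v \<in> \<phi> i \<Longrightarrow> v \<in> \<phi> j \<Longrightarrow> i = j" using iso_disj[OF g iso] by blast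
  have disj: "x \<notin> A" "x \<notin> B" "y \<notin> A" "y \<notin> B" "x \<noteq> y" "\<And>v. v \<in> A \<Longrightarrow> v \<notin> B"
    using D[of 0 2 x] D[of 1 2 x] D[of 0 3 y] D[of 1 3 y] D[of 2 3 x] D[of 0 1] X Y unfolding A_def B_def by auto
  have CR: "\<And>i j u v. i < 4 \<Longrightarrow> j < 4 \<Longrightarrow> i \<noteq> j \<Longrightarrow> u \<in> \<phi> i \<Longrightarrow> v \<in> \<phi> j \<Longrightarrow> E u v = pat_adj C4 i j"
    using iso_cross[OF g iso] by blast
  have eAB: "\<And>u v. u \<in> A \<Longrightarrow> v \<in> B \<Longrightarrow> E u v \<and> E v u"
    using CR[of 0 1] CR[of 1 0] unfolding A_def B_def by (auto simp: pat_adj_def C4_def)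
  have eBx: "\<And>v. v \<in> B \<Longrightarrow> E v x \<and> E x v"
    using CR[of 1 2] CR[of 2 1] X unfolding B_def by (auto simp: pat_adj_def C4_def)
  have exy: "E x y \<and> E y x"
    using CR[of 2 3] CR[of 3 2] X Y by (auto simp: pat_adj_def C4_def)
  have eyA: "\<And>v. v \<in> A \<Longrightarrow> E v y \<and> E y v"
    using CR[of 0 3] CR[of 3 0] Y unfolding A_def by (auto simp: pat_adj_def C4_def)
  have nAx: "\<And>v. v \<in> A \<Longrightarrow> \<not> E v x \<and> \<not> E x v"
    using CR[of 0 2] CR[of 2 0] X unfolding A_def by (auto simp: pat_adj_def C4_def)
  have nBy: "\<And>v. v \<in> B \<Longrightarrow> \<not> E v y \<and> \<not> E y v"
    using CR[of 1 3] CR[of 3 1] Y unfolding B_def by (auto simp: pat_adj_def C4_def)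
  have irr: "\<And>v. \<not> E v v" using graph_irr[OF g] by blast
  have kB: "\<And>u v. u \<in> B \<Longrightarrow> v \<in> B \<Longrightarrow> u \<noteq> v \<Longrightarrow> E u v" using tB unfolding typeK_def B_def by blast
  have cA: "card A \<ge> 2" and cB: "card B \<ge> 2" using tA tB unfolding typeK_def A_def B_def by auto
  have finA: "finite A" and finB: "finite B" using finite_subset[OF sub(1) fin] finite_subset[OF sub(2) fin] by auto
  have oB: "\<And>v. v \<in> B \<Longrightarrow> \<exists>u\<in>B. u \<noteq> v"
  proof -
    fix v assume v: "v \<in> B"
    have "\<not> B \<subseteq> {v}"
    proof
      assume "B \<subseteq> {v}"
      then have "card B \<le> card {v}" by (intro card_mono) auto
      then show False using cB by simp
    qed
    then show "\<exists>u\<in>B. u \<noteq> v" by blast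
  qed
  have Veq: "V = A \<union> B \<union> {x} \<union> {y}"
  proof
    show "V \<subseteq> A \<union> B \<union> {x} \<union> {y}" using cover by blast
    show "A \<union> B \<union> {x} \<union> {y} \<subseteq> V" using sub by blast
  qed
  have cardV: "card V = card A + card B + 2"
  proof -
    have "card (A \<union> B \<union> {x} \<union> {y}) = card (A \<union> B \<union> {x}) + 1"
      using finA finB disj by (subst card_Un_disjoint) auto
    also have "card (A \<union> B \<union> {x}) = card (A \<union> B) + 1"
      using finA finB disj by (subst card_Un_disjoint) auto
    also have "card (A \<union> B) = card A + card B"
      using finA finB disj by (subst card_Un_disjoint) auto
    finally show ?thesis using Veq by simp
  qed
  have tcA: "\<And>v. v \<in> A \<Longrightarrow> twin_class V E v = A" using iso_tc[OF g iso, of 0] unfolding A_def by simp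
  have tcB: "\<And>v. v \<in> B \<Longrightarrow> twin_class V E v = B" using iso_tc[OF g iso, of 1] unfolding B_def by simp
  have tcx: "twin_class V E x = {x}" using iso_tc[OF g iso, of 2 x] X by simp
  have tcy: "twin_class V E y = {y}" using iso_tc[OF g iso, of 3 y] Y by simp
  define M where "M = max (card A) (card B)"
  define b where "b v = (if v = x then M else 0)" for v
  define c where "c v = ix (twin_class V E v) v + b v" for v
  have ixlt: "\<And>v. v \<in> V \<Longrightarrow> ix (twin_class V E v) v < card (twin_class V E v)"
    using ix_lt fin tc_sub tc_self finite_subset by metis
  have cx: "c x = M" using ixlt[OF sub(3)] unfolding c_def b_def tcx by simp
  have clt: "\<And>v. v \<in> V \<Longrightarrow> v \<noteq> x \<Longrightarrow> c v < M"
  proof -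
    fix v assume v: "v \<in> V" "v \<noteq> x"
    have "card (twin_class V E v) \<le> M" using cover[OF v(1)] v tcA tcB tcy cA unfolding M_def by auto
    then show "c v < M" using ixlt[OF v(1)] v unfolding c_def b_def by simp
  qed
  have bcl: "\<And>u v. u \<in> V \<Longrightarrow> v \<in> V \<Longrightarrow> twin_class V E u = twin_class V E v \<Longrightarrow> b u = b v"
    unfolding b_def using tcx tc_self by (metis singletonD)
  have dist: "distinguishing V E c (M + 1)"
    unfolding distinguishing_def
  proof (intro conjI allI impI)
    show "c ` V \<subseteq> {..<M + 1}" using cx clt by fastforce
  next
    fix f assume fa: "is_aut V E f \<and> (\<forall>v\<in>V. c (f v) = c v)"
    then have f: "is_aut V E f" and fc: "\<forall>v\<in>V. c (f v) = c v" by auto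
    define S1 where "S1 = {v\<in>V. c v = M}"
    have s1: "stabS V f S1" unfolding S1_def by (rule stab_color[OF f fc])
    have S1: "S1 = {x}" unfolding S1_def using cx clt sub by fastforce
    define S2 where "S2 = {v\<in>V. \<exists>u\<in>S1. E v u}"
    have s2: "stabS V f S2" unfolding S2_def by (rule stab_adj[OF f _ s1]) (auto simp: S1 sub)
    have S2: "S2 = B \<union> {y}" unfolding S2_def S1 using cover eBx exy nAx irr sub by blast
    define S3 where "S3 = V - S2 - S1"
    have s3: "stabS V f S3" unfolding S3_def using stab_Diff stab_V[OF f] s1 s2 by metis
    have S3: "S3 = A" unfolding S3_def S2 S1 using cover disj sub by blast
    define S4 where "S4 = {v\<in>V. \<exists>u\<in>S2. E v u} \<inter> S2"
    have s4: "stabS V f S4" unfolding S4_def by (rule stab_Int[OF stab_adj[OF f _ s2] s2]) (auto simp: S2 sub)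
    have S4: "S4 = B" unfolding S4_def S2
    proof (rule set_eqI, rule iffI)
      fix v assume "v \<in> {v \<in> V. \<exists>u\<in>B \<union> {y}. E v u} \<inter> (B \<union> {y})"
      then show "v \<in> B" using nBy irr by blast
    next
      fix v assume v: "v \<in> B"
      then obtain u where "u \<in> B" "u \<noteq> v" using oB by blast
      then show "v \<in> {v \<in> V. \<exists>u\<in>B \<union> {y}. E v u} \<inter> (B \<union> {y})" using kB v sub by blast
    qed
    define S5 where "S5 = S2 - S4"
    have s5: "stabS V f S5" unfolding S5_def using stab_Diff s2 s4 by metis
    have S5: "S5 = {y}" unfolding S5_def S2 S4 using disj by blast
    show "\<forall>v\<in>V. f v = v"
    proof
      fix v assume v: "v \<in> V"
      have fv: "f v \<in> V" using aut_in[OF f v] .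
      have "f v \<in> twin_class V E v"
        using cover[OF v] stab_mem[OF s1 v] stab_mem[OF s3 v] stab_mem[OF s4 v] stab_mem[OF s5 v]
          tcA tcB tcx tcy S1 S3 S4 S5 by auto
      then have "twin_class V E (f v) = twin_class V E v" using tc_eq[OF g] by blast
      then show "f v = v" using col_inj[OF g fv v, of b] bcl[OF fv v] fc v unfolding c_def by auto
    qed
  qed
  have "dist_num V E \<le> M + 1" using dist_le[OF dist] .
  then show ?thesis using cardV cA cB unfolding M_def by linarith
qed



lemma G10:
  assumes g: "graph V E" and iso: "twin_iso V E C4_K1 5 \<phi>"
    and tA: "typeK E (\<phi> 0)" and tB: "typeK E (\<phi> 1)" and t2: "type1 (\<phi> 2)" and t3: "type1 (\<phi> 3)"
    and tZ: "type1K E (\<phi> 4)"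
  shows "dist_num V E + 3 \<le> card V"
proof -
  define A where "A = \<phi> 0"
  define B where "B = \<phi> 1"
  define Z where "Z = \<phi> 4"
  obtain x where X: "\<phi> 2 = {x}" using t2 unfolding type1_def by (meson card_1_singletonE)
  obtain y where Y: "\<phi> 3 = {y}" using t3 unfolding type1_def by (meson card_1_singletonE)
  have fin: "finite V" using g unfolding graph_def by blast
  have sub: "A \<subseteq> V" "B \<subseteq> V" "x \<in> V" "y \<in> V" "Z \<subseteq> V"
    using iso_sub[OF iso, of 0] iso_sub[OF iso, of 1] iso_sub[OF iso, of 2] iso_sub[OF iso, of 3]
      iso_sub[OF iso, of 4] X Y
    unfolding A_def B_def Z_def by auto
  have cover: "\<And>v. v \<in> V \<Longrightarrow> v \<in> A \<or> v \<in> B \<or> v = x \<or> v = y \<or> v \<in> Z"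
  proof -
    fix v assume "v \<in> V"
    then obtain i where "i < 5" "v \<in> \<phi> i" using iso_cover[OF iso] by blast
    moreover have "i = 0 \<or> i = 1 \<or> i = 2 \<or> i = 3 \<or> i = 4" using cases5 \<open>i < 5\<close> by blast
    ultimately show "v \<in> A \<or> v \<in> B \<or> v = x \<or> v = y \<or> v \<in> Z" unfolding A_def B_def Z_def using X Y by auto
  qed
  have D: "\<And>i j v. i < 5 \<Longrightarrow> j < 5 \<Longrightarrow> v \<in> \<phi> i \<Longrightarrow> v \<in> \<phi> j \<Longrightarrow> i = j" using iso_disj[OF g iso] by blast
  have disj: "x \<notin> A" "x \<notin> B" "y \<notin> A" "y \<notin> B" "x \<noteq> y" "\<And>v. v \<in> A \<Longrightarrow> v \<notin> B"
    "x \<notin> Z" "y \<notin> Z" "\<And>v. v \<in> A \<Longrightarrow> v \<notin> Z" "\<And>v. v \<in> B \<Longrightarrow> v \<notin> Z"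
    using D[of 0 2 x] D[of 1 2 x] D[of 0 3 y] D[of 1 3 y] D[of 2 3 x] D[of 0 1] D[of 4 2 x] D[of 4 3 y]
      D[of 0 4] D[of 1 4] X Y unfolding A_def B_def Z_def by auto
  have CR: "\<And>i j u v. i < 5 \<Longrightarrow> j < 5 \<Longrightarrow> i \<noteq> j \<Longrightarrow> u \<in> \<phi> i \<Longrightarrow> v \<in> \<phi> j \<Longrightarrow> E u v = pat_adj C4_K1 i j"
    using iso_cross[OF g iso] by blast
  have eBx: "\<And>v. v \<in> B \<Longrightarrow> E v x"
    using CR[of 1 2] X unfolding B_def by (auto simp: pat_adj_def C4_K1_def)
  have eyx: "E y x" "E x y"
    using CR[of 3 2] CR[of 2 3] X Y by (auto simp: pat_adj_def C4_K1_def)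
  have eZx: "\<And>v. v \<in> Z \<Longrightarrow> E v x"
    using CR[of 4 2] X unfolding Z_def by (auto simp: pat_adj_def C4_K1_def)
  have nAx: "\<And>v. v \<in> A \<Longrightarrow> \<not> E v x"
    using CR[of 0 2] X unfolding A_def by (auto simp: pat_adj_def C4_K1_def)
  have eAy: "\<And>v. v \<in> A \<Longrightarrow> E v y"
    using CR[of 0 3] Y unfolding A_def by (auto simp: pat_adj_def C4_K1_def)
  have eZy: "\<And>v. v \<in> Z \<Longrightarrow> E v y"
    using CR[of 4 3] Y unfolding Z_def by (auto simp: pat_adj_def C4_K1_def)
  have nBy: "\<And>v. v \<in> B \<Longrightarrow> \<not> E v y"
    using CR[of 1 3] Y unfolding B_def by (auto simp: pat_adj_def C4_K1_def)
  have irr: "\<And>v. \<not> E v v" using graph_irr[OF g] by blast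
  have cA: "card A \<ge> 2" and cB: "card B \<ge> 2" using tA tB unfolding typeK_def A_def B_def by auto
  have cZ: "card Z \<ge> 1" using t1K_card tZ unfolding Z_def by blast
  have finA: "finite A" and finB: "finite B" and finZ: "finite Z"
    using finite_subset[OF sub(1) fin] finite_subset[OF sub(2) fin] finite_subset[OF sub(5) fin] by auto
  have Veq: "V = A \<union> B \<union> Z \<union> {x} \<union> {y}"
  proof
    show "V \<subseteq> A \<union> B \<union> Z \<union> {x} \<union> {y}" using cover by blast
    show "A \<union> B \<union> Z \<union> {x} \<union> {y} \<subseteq> V" using sub by blast
  qed
  have cardV: "card V = card A + card B + card Z + 2"
  proof -
    have "card (A \<union> B \<union> Z \<union> {x} \<union> {y}) = card (A \<union> B \<union> Z \<union> {x}) + 1"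
      using finA finB finZ disj by (subst card_Un_disjoint) auto
    also have "card (A \<union> B \<union> Z \<union> {x}) = card (A \<union> B \<union> Z) + 1"
      using finA finB finZ disj by (subst card_Un_disjoint) auto
    also have "card (A \<union> B \<union> Z) = card (A \<union> B) + card Z"
      using finA finB finZ disj by (subst card_Un_disjoint) auto
    also have "card (A \<union> B) = card A + card B"
      using finA finB disj by (subst card_Un_disjoint) auto
    finally show ?thesis using Veq by simp
  qed
  have tcA: "\<And>v. v \<in> A \<Longrightarrow> twin_class V E v = A" using iso_tc[OF g iso, of 0] unfolding A_def by simp
  have tcB: "\<And>v. v \<in> B \<Longrightarrow> twin_class V E v = B" using iso_tc[OF g iso, of 1] unfolding B_def by simp
  have tcZ: "\<And>v. v \<in> Z \<Longrightarrow> twin_class V E v = Z" using iso_tc[OF g iso, of 4] unfolding Z_def by simp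
  have tcx: "twin_class V E x = {x}" using iso_tc[OF g iso, of 2 x] X by simp
  have tcy: "twin_class V E y = {y}" using iso_tc[OF g iso, of 3 y] Y by simp
  define M where "M = max (card A) (max (card B) (card Z))"
  define b where "b v = (if v = x then M else if v = y then M + 1 else 0)" for v
  define c where "c v = ix (twin_class V E v) v + b v" for v
  have ixlt: "\<And>v. v \<in> V \<Longrightarrow> ix (twin_class V E v) v < card (twin_class V E v)"
    using ix_lt fin tc_sub tc_self finite_subset by metis
  have cx: "c x = M" using ixlt[OF sub(3)] disj unfolding c_def b_def tcx by simp
  have cy: "c y = M + 1" using ixlt[OF sub(4)] disj unfolding c_def b_def tcy by simp
  have clt: "\<And>v. v \<in> V \<Longrightarrow> v \<noteq> x \<Longrightarrow> v \<noteq> y \<Longrightarrow> c v < M"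
  proof -
    fix v assume v: "v \<in> V" "v \<noteq> x" "v \<noteq> y"
    have "card (twin_class V E v) \<le> M" using cover[OF v(1)] v tcA tcB tcZ unfolding M_def by auto
    then show "c v < M" using ixlt[OF v(1)] v unfolding c_def b_def by simp
  qed
  have bcl: "\<And>u v. u \<in> V \<Longrightarrow> v \<in> V \<Longrightarrow> twin_class V E u = twin_class V E v \<Longrightarrow> b u = b v"
  proof -
    fix u v assume uv: "u \<in> V" "v \<in> V" "twin_class V E u = twin_class V E v"
    then have "u \<in> twin_class V E v" "v \<in> twin_class V E u" using tc_self by metis+
    then have "(u = x) = (v = x)" "(u = y) = (v = y)" using tcx tcy by auto
    then show "b u = b v" unfolding b_def by simp
  qed
  have dist: "distinguishing V E c (M + 2)"
    unfolding distinguishing_def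
  proof (intro conjI allI impI)
    show "c ` V \<subseteq> {..<M + 2}" using cx cy clt by fastforce
  next
    fix f assume fa: "is_aut V E f \<and> (\<forall>v\<in>V. c (f v) = c v)"
    then have f: "is_aut V E f" and fc: "\<forall>v\<in>V. c (f v) = c v" by auto
    define S1 where "S1 = {v\<in>V. c v = M}"
    have s1: "stabS V f S1" unfolding S1_def by (rule stab_color[OF f fc])
    have S1: "S1 = {x}" unfolding S1_def using cx cy clt sub by fastforce
    define S2 where "S2 = {v\<in>V. c v = M + 1}"
    have s2: "stabS V f S2" unfolding S2_def by (rule stab_color[OF f fc])
    have S2: "S2 = {y}" unfolding S2_def using cx cy clt sub by fastforce
    define NX where "NX = {v\<in>V. \<exists>u\<in>S1. E v u}"
    have nx: "stabS V f NX" unfolding NX_def by (rule stab_adj[OF f _ s1]) (auto simp: S1 sub)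
    have NX: "NX = B \<union> {y} \<union> Z" unfolding NX_def S1 using cover eBx eyx eZx nAx irr sub by blast
    define NY where "NY = {v\<in>V. \<exists>u\<in>S2. E v u}"
    have ny: "stabS V f NY" unfolding NY_def by (rule stab_adj[OF f _ s2]) (auto simp: S2 sub)
    have NY: "NY = A \<union> {x} \<union> Z" unfolding NY_def S2 using cover eAy eyx eZy nBy irr sub by blast
    define SA where "SA = NY - NX - S1"
    have sa: "stabS V f SA" unfolding SA_def using stab_Diff s1 nx ny by metis
    have SA: "SA = A" unfolding SA_def NX NY S1 using disj by blast
    define SZ where "SZ = NX \<inter> NY"
    have sz: "stabS V f SZ" unfolding SZ_def using stab_Int nx ny by metis
    have SZ: "SZ = Z" unfolding SZ_def NX NY using disj by blast
    define SB where "SB = NX - NY - S2"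
    have sb: "stabS V f SB" unfolding SB_def using stab_Diff s2 nx ny by metis
    have SB: "SB = B" unfolding SB_def NX NY S2 using disj by blast
    show "\<forall>v\<in>V. f v = v"
    proof
      fix v assume v: "v \<in> V"
      have fv: "f v \<in> V" using aut_in[OF f v] .
      have "f v \<in> twin_class V E v"
        using cover[OF v] stab_mem[OF s1 v] stab_mem[OF s2 v] stab_mem[OF sa v] stab_mem[OF sb v] stab_mem[OF sz v]
          tcA tcB tcx tcy tcZ S1 S2 SA SB SZ by auto
      then have "twin_class V E (f v) = twin_class V E v" using tc_eq[OF g] by blast
      then show "f v = v" using col_inj[OF g fv v, of b] bcl[OF fv v] fc v unfolding c_def by auto
    qed
  qed
  have "dist_num V E \<le> M + 2" using dist_le[OF dist] .
  then show ?thesis using cardV cA cB cZ unfolding M_def by linarith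
qed


theorem lemma4p10:
  fixes V :: "'a set" and E :: "'a \<Rightarrow> 'a \<Rightarrow> bool"
  assumes "graph V E"
    and "caseG7 V E \<or> caseG8 V E \<or> caseG9 V E \<or> caseG10 V E"
  shows "int (dist_num V E) \<noteq> int (card V) - 2"
proof -
  have "dist_num V E + 3 \<le> card V"
    using assms(2)
  proof (elim disjE)
    assume "caseG7 V E"
    then show ?thesis unfolding caseG7_def using G7[OF assms(1)] by blast
  next
    assume "caseG8 V E"
    then show ?thesis unfolding caseG8_def using G8[OF assms(1)] by blast
  next
    assume "caseG9 V E"
    then show ?thesis unfolding caseG9_def using G9[OF assms(1)] by blast
  next
    assume "caseG10 V E"
    then show ?thesis unfolding caseG10_def using G10[OF assms(1)] by blast
  qed
  then show ?thesis by linarith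
qed

end
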